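(* If $X$ is a path connected, indecomposable topological quandle, then $H_0(X)\cong\mathbb{Z}$.
   Context: A quandle is a set with a binary operation $\triangleright$ such that $x\triangleright x=x$, each $\beta_y(x)=x\triangleright y$ is bijective, and $(x\triangleright y)\triangleright z=(x\triangleright z)\triangleright(y\triangleright z)$; write $x\triangleright^{-1}y=\beta_y^{-1}(x)$. A topological quandle is a topological space with a continuous quandle operation such that every $\beta_y$ is a homeomorphism. A quandle $X$ is indecomposable if for every $x,y\in X$ there exist $y_1,\dots,y_n\in X$ and $e_1,\dots,e_n\in\{-1,1\}$ with $x=(\cdots((y\triangleright^{e_1}y_1)\triangleright^{e_2}y_2)\cdots)\triangleright^{e_n}y_n$. $C_0(X)$ is the free abelian group on points of $X$ (constant 0-simplices $\sigma_x$), $C_1(X)$ the free abelian group on paths $\sigma:[0,1]\to X$; for a path $\sigma_{[a,b]}$ from $a$ to $b$, $\partial_1\sigma_{[a,b]}=\sigma_a-\sigma_{a\triangleright b}$. $H_0(X)=C_0(X)/\partial_1(C_1(X))$. (This is degree $0$ of the chain complex where $C_n(X)$ is free on singular $n$-simplices $\sigma_{[x_1,\dots,x_{n+1}]}$, $x_i=\sigma(e_{i-1})$, with $\partial_n\sigma=\sum_{i=2}^{n+1}(-1)^i(d_i\sigma-d_i\sigma\triangleright s_i\sigma)$, $d_i\sigma$ the face omitting $x_i$, $s_i\sigma$ the simplex $\sigma\circ\iota_i$ with vertices $x_i,\dots,x_i,x_{i+1},\dots,x_{n+1}$, and $\triangleright$ applied pointwise.) *)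

theory Defs
  imports "HOL-Analysis.Analysis" "HOL-Algebra.Free_Abelian_Groups" "HOL-Algebra.Elementary_Groups"
    "HOL-Algebra.Coset"
begin

definition quandle_on :: "'a set \<Rightarrow> ('a \<Rightarrow> 'a \<Rightarrow> 'a) \<Rightarrow> bool" where
  "quandle_on S qop \<longleftrightarrow>
     (\<forall>x\<in>S. \<forall>y\<in>S. qop x y \<in> S) \<and>
     (\<forall>x\<in>S. qop x x = x) \<and>
     (\<forall>y\<in>S. bij_betw (\<lambda>x. qop x y) S S) \<and>
     (\<forall>x\<in>S. \<forall>y\<in>S. \<forall>z\<in>S. qop (qop x y) z = qop (qop x z) (qop y z))"

definition topological_quandle :: "'a topology \<Rightarrow> ('a \<Rightarrow> 'a \<Rightarrow> 'a) \<Rightarrow> bool" where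
  "topological_quandle X qop \<longleftrightarrow>
     quandle_on (topspace X) qop \<and>
     continuous_map (prod_topology X X) X (\<lambda>(x, y). qop x y) \<and>
     (\<forall>y\<in>topspace X. homeomorphic_map X X (\<lambda>x. qop x y))"

text \<open>x \<triangleright>^e y for e = True (exponent 1) or e = False (exponent -1).\<close>
definition qop_pow :: "'a set \<Rightarrow> ('a \<Rightarrow> 'a \<Rightarrow> 'a) \<Rightarrow> 'a \<Rightarrow> bool \<Rightarrow> 'a \<Rightarrow> 'a" where
  "qop_pow S qop x e y = (if e then qop x y else inv_into S (\<lambda>z. qop z y) x)"

definition indecomposable :: "'a set \<Rightarrow> ('a \<Rightarrow> 'a \<Rightarrow> 'a) \<Rightarrow> bool" where
  "indecomposable S qop \<longleftrightarrow>
     (\<forall>x\<in>S. \<forall>y\<in>S. \<exists>ys es. length es = length ys \<and> set ys \<subseteq> S \<and>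
        x = foldl (\<lambda>a (yi, ei). qop_pow S qop a ei yi) y (zip ys es))"

definition C0 :: "'a topology \<Rightarrow> ('a \<Rightarrow>\<^sub>0 int) monoid" where
  "C0 X = free_Abelian_group (topspace X)"

definition C1 :: "'a topology \<Rightarrow> ((real \<Rightarrow> 'a) \<Rightarrow>\<^sub>0 int) monoid" where
  "C1 X = free_Abelian_group {g. pathin X g}"

definition bd1 :: "('a \<Rightarrow> 'a \<Rightarrow> 'a) \<Rightarrow> ((real \<Rightarrow> 'a) \<Rightarrow>\<^sub>0 int) \<Rightarrow> ('a \<Rightarrow>\<^sub>0 int)" where
  "bd1 qop = frag_extend (\<lambda>g. frag_of (g 0) - frag_of (qop (g 0) (g 1)))"

definition H0 :: "'a topology \<Rightarrow> ('a \<Rightarrow> 'a \<Rightarrow> 'a) \<Rightarrow> ('a \<Rightarrow>\<^sub>0 int) set monoid" where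
  "H0 X qop = C0 X Mod (bd1 qop ` carrier (C1 X))"

end

theory Submission
  imports Defs
begin

lemma hom_diff_int:
  assumes h: "h \<in> hom (free_Abelian_group S) integer_group"
    and a: "Poly_Mapping.keys a \<subseteq> S" and b: "Poly_Mapping.keys b \<subseteq> S"
  shows "h (a - b) = h a - h b"
proof -
  have ab: "Poly_Mapping.keys (a - b) \<subseteq> S"
    using a b keys_diff[of a b] by blast
  have "h ((a - b) + b) = h (a - b) + h b"
    using hom_mult[OF h, of "a - b" b] ab b by simp
  then show ?thesis by simp
qed

lemma hom_cmul_int:
  assumes h: "h \<in> hom (free_Abelian_group S) integer_group"
    and a: "Poly_Mapping.keys a \<subseteq> S"
  shows "h (frag_cmul n a) = n * h a"
proof -
  have "h (a [^]\<^bsub>free_Abelian_group S\<^esub> n) = h a [^]\<^bsub>integer_group\<^esub> n"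
    by (rule hom_int_pow[OF h]) (use a in auto)
  then show ?thesis using a by simp
qed

theorem mainTheorem5:
  fixes X :: "'a topology" and qop :: "'a \<Rightarrow> 'a \<Rightarrow> 'a"
  assumes "topspace X \<noteq> {}"
    and "topological_quandle X qop"
    and "path_connected_space X"
    and "indecomposable (topspace X) qop"
  shows "H0 X qop \<cong> integer_group"
proof -
  define S where "S = topspace X"
  define B where "B = bd1 qop ` carrier (C1 X)"
  have Q: "quandle_on S qop" using assms(2) unfolding topological_quandle_def S_def by simp
  have closed: "\<And>x y. x \<in> S \<Longrightarrow> y \<in> S \<Longrightarrow> qop x y \<in> S" using Q unfolding quandle_on_def by blast
  have bij: "\<And>y. y \<in> S \<Longrightarrow> bij_betw (\<lambda>x. qop x y) S S" using Q unfolding quandle_on_def by blast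
  obtain x0 where x0: "x0 \<in> S" using assms(1) S_def by blast
  obtain h where h: "h \<in> hom (free_Abelian_group S) integer_group"
    and hof: "\<And>x. x \<in> S \<Longrightarrow> h (frag_of x) = 1"
    using comm_group.free_Abelian_group_universal[OF abelian_integer_group, of "\<lambda>_. 1" S] by auto
  have B0: "0 \<in> B" unfolding B_def
    by (rule image_eqI[of _ _ 0]) (auto simp: bd1_def C1_def)
  have Bdiff: "u - v \<in> B" if uv: "u \<in> B" "v \<in> B" for u v
  proof -
    obtain c1 where c1: "c1 \<in> carrier (C1 X)" "u = bd1 qop c1" using uv(1) B_def by blast
    obtain c2 where c2: "c2 \<in> carrier (C1 X)" "v = bd1 qop c2" using uv(2) B_def by blast
    have "c1 - c2 \<in> carrier (C1 X)" using c1 c2 keys_diff[of c1 c2] unfolding C1_def by fastforce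
    moreover have "u - v = bd1 qop (c1 - c2)" using c1 c2 by (simp add: bd1_def frag_extend_diff)
    ultimately show ?thesis unfolding B_def by blast
  qed
  have Bneg: "- u \<in> B" if "u \<in> B" for u
    using Bdiff[OF B0 that] by simp
  have Badd: "u + v \<in> B" if "u \<in> B" "v \<in> B" for u v
    using Bdiff[OF that(1) Bneg[OF that(2)]] by simp
  define R where "R = (\<lambda>x y. frag_of x - frag_of y \<in> B)"
  have Rsym: "R y x" if "R x y" for x y
    using Bneg[OF that[unfolded R_def]] unfolding R_def by simp
  have Rtrans: "R x z" if "R x y" "R y z" for x y z
    using Badd[OF that[unfolded R_def]] unfolding R_def by simp
  have Rstep: "R a (qop a y)" if ay: "a \<in> S" "y \<in> S" for a y
  proof -
    obtain g where g: "pathin X g" "g 0 = a" "g 1 = y"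
      using assms(3) ay unfolding path_connected_space_def S_def by blast
    have "frag_of g \<in> carrier (C1 X)" using g unfolding C1_def by simp
    moreover have "bd1 qop (frag_of g) = frag_of a - frag_of (qop a y)"
      using g by (simp add: bd1_def)
    ultimately show ?thesis unfolding R_def B_def by (metis image_eqI)
  qed
  have Rpow: "qop_pow S qop a e y \<in> S \<and> R a (qop_pow S qop a e y)" if "a \<in> S" "y \<in> S" for a e y
  proof (cases e)
    case True
    then show ?thesis using Rstep[OF that] closed[OF that] by (simp add: qop_pow_def)
  next
    case False
    define a' where "a' = inv_into S (\<lambda>z. qop z y) a"
    have a'S: "a' \<in> S" unfolding a'_def
      by (metis bij[OF that(2)] bij_betw_def inv_into_into that(1))
    have "qop a' y = a" unfolding a'_def
      by (metis bij[OF that(2)] bij_betw_def f_inv_into_f that(1))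
    then have "R a' a" using Rstep[OF a'S that(2)] by simp
    then show ?thesis using False a'S Rsym by (simp add: qop_pow_def a'_def)
  qed
  have fold: "\<And>y. y \<in> S \<Longrightarrow> fst ` set zs \<subseteq> S \<Longrightarrow>
      foldl (\<lambda>a (yi, ei). qop_pow S qop a ei yi) y zs \<in> S \<and>
      (foldl (\<lambda>a (yi, ei). qop_pow S qop a ei yi) y zs = y \<or> R y (foldl (\<lambda>a (yi, ei). qop_pow S qop a ei yi) y zs))" for zs
  proof (induction zs)
    case Nil then show ?case by simp
  next
    case (Cons p zs)
    obtain yi ei where p: "p = (yi, ei)" by fastforce
    have yi: "yi \<in> S" using Cons.prems p by auto
    have st: "qop_pow S qop y ei yi \<in> S" "R y (qop_pow S qop y ei yi)" using Rpow[OF Cons.prems(1) yi] by auto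
    have fz: "fst ` set zs \<subseteq> S" using Cons.prems(2) by auto
    note IH = Cons.IH[OF st(1) fz]
    have eq: "foldl (\<lambda>a (yi, ei). qop_pow S qop a ei yi) y (p # zs) =
      foldl (\<lambda>a (yi, ei). qop_pow S qop a ei yi) (qop_pow S qop y ei yi) zs"
      by (simp add: p)
    define r where "r = foldl (\<lambda>a (yi, ei). qop_pow S qop a ei yi) (qop_pow S qop y ei yi) zs"
    have IH': "r \<in> S" "r = qop_pow S qop y ei yi \<or> R (qop_pow S qop y ei yi) r"
      using IH unfolding r_def by auto
    have "R y r"
      using IH'(2)
    proof
      assume "R (qop_pow S qop y ei yi) r" then show "R y r" using Rtrans[OF st(2)] by blast
    qed (use st(2) in simp)
    then show ?case unfolding eq r_def[symmetric] using IH'(1) by blast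
  qed
  have Rall: "R x y" if xy: "x \<in> S" "y \<in> S" for x y
  proof -
    obtain ys es where ye: "length es = length ys" "set ys \<subseteq> S"
      "x = foldl (\<lambda>a (yi, ei). qop_pow S qop a ei yi) y (zip ys es)"
      using assms(4) xy unfolding indecomposable_def S_def by blast
    have "fst ` set (zip ys es) \<subseteq> S" using ye(2) by (auto dest: set_zip_leftD)
    then have "x = y \<or> R y x" using fold[OF xy(2)] ye(3) by auto
    then show ?thesis
    proof
      assume "x = y" then show ?thesis unfolding R_def using B0 by simp
    qed (rule Rsym)
  qed
  have C0: "C0 X = free_Abelian_group S" unfolding C0_def S_def by simp
  have gh: "group_hom (C0 X) integer_group h"
    unfolding C0 using h by (simp add: group_hom_def group_hom_axioms_def)
  have surj: "h ` carrier (C0 X) = carrier integer_group"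
  proof -
    have "n \<in> h ` carrier (C0 X)" for n
    proof -
      have "h (frag_cmul n (frag_of x0)) = n" using hom_cmul_int[OF h, of "frag_of x0" n] x0 hof by simp
      moreover have "frag_cmul n (frag_of x0) \<in> carrier (C0 X)" unfolding C0 using x0 keys_cmul
        by (metis carrier_free_Abelian_group_iff frag_of_in_free_Abelian_group order_trans)
      ultimately show ?thesis by (metis image_eqI)
    qed
    then show ?thesis by auto
  qed
  have ker: "kernel (C0 X) integer_group h = B"
  proof
    show "kernel (C0 X) integer_group h \<subseteq> B"
    proof
      fix c assume "c \<in> kernel (C0 X) integer_group h"
      then have c: "Poly_Mapping.keys c \<subseteq> S" "h c = 0" unfolding kernel_def C0 by auto
      have "c - frag_cmul (h c) (frag_of x0) \<in> B"
        using c(1)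
      proof (rule free_Abelian_group_induct[where P="\<lambda>c. c - frag_cmul (h c) (frag_of x0) \<in> B"])
        show "0 - frag_cmul (h 0) (frag_of x0) \<in> B" using B0 by (simp add: hom_one[OF h, simplified])
      next
        fix u v
        assume uv: "Poly_Mapping.keys u \<subseteq> S" "Poly_Mapping.keys v \<subseteq> S"
          "u - frag_cmul (h u) (frag_of x0) \<in> B" "v - frag_cmul (h v) (frag_of x0) \<in> B"
        have eqn: "u - v - frag_cmul (h (u - v)) (frag_of x0) =
              (u - frag_cmul (h u) (frag_of x0)) - (v - frag_cmul (h v) (frag_of x0))"
          using hom_diff_int[OF h uv(1,2)] by (simp add: frag_cmul_diff_distrib)
        show "u - v - frag_cmul (h (u - v)) (frag_of x0) \<in> B" unfolding eqn by (rule Bdiff[OF uv(3,4)])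
      next
        fix a assume a: "a \<in> S"
        then show "frag_of a - frag_cmul (h (frag_of a)) (frag_of x0) \<in> B"
          using Rall[OF a x0] hof unfolding R_def by simp
      qed
      then show "c \<in> B" using c by simp
    qed
  next
    show "B \<subseteq> kernel (C0 X) integer_group h"
    proof
      fix u assume "u \<in> B"
      then obtain c where c: "Poly_Mapping.keys c \<subseteq> {g. pathin X g}" "u = bd1 qop c"
        unfolding B_def C1_def by auto
      have "Poly_Mapping.keys (bd1 qop c) \<subseteq> S \<and> h (bd1 qop c) = 0"
        using c(1)
      proof (rule free_Abelian_group_induct[where P="\<lambda>c. Poly_Mapping.keys (bd1 qop c) \<subseteq> S \<and> h (bd1 qop c) = 0"])
        show "Poly_Mapping.keys (bd1 qop 0) \<subseteq> S \<and> h (bd1 qop 0) = 0"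
          by (simp add: bd1_def hom_one[OF h, simplified])
      next
        fix u v
        assume uv: "Poly_Mapping.keys (bd1 qop u) \<subseteq> S \<and> h (bd1 qop u) = 0"
          "Poly_Mapping.keys (bd1 qop v) \<subseteq> S \<and> h (bd1 qop v) = 0"
        have e: "bd1 qop (u - v) = bd1 qop u - bd1 qop v" by (simp add: bd1_def frag_extend_diff)
        have "h (bd1 qop u - bd1 qop v) = 0" using hom_diff_int[OF h] uv by simp
        moreover have "Poly_Mapping.keys (bd1 qop u - bd1 qop v) \<subseteq> S"
          using keys_diff[of "bd1 qop u" "bd1 qop v"] uv by blast
        ultimately show "Poly_Mapping.keys (bd1 qop (u - v)) \<subseteq> S \<and> h (bd1 qop (u - v)) = 0"
          unfolding e by blast
      next
        fix g assume "g \<in> {g. pathin X g}"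
        then have g: "pathin X g" by simp
        have g01: "g 0 \<in> S" "g 1 \<in> S" using g path_image_subset_topspace[of X g] unfolding S_def by auto
        then have q: "qop (g 0) (g 1) \<in> S" using closed by blast
        have e: "bd1 qop (frag_of g) = frag_of (g 0) - frag_of (qop (g 0) (g 1))" by (simp add: bd1_def)
        have "h (frag_of (g 0) - frag_of (qop (g 0) (g 1))) = 0"
          using hom_diff_int[OF h, of "frag_of (g 0)" "frag_of (qop (g 0) (g 1))"] hof g01 q by simp
        moreover have "Poly_Mapping.keys (frag_of (g 0) - frag_of (qop (g 0) (g 1))) \<subseteq> S"
          using keys_diff[of "frag_of (g 0)" "frag_of (qop (g 0) (g 1))"] g01 q by auto
        ultimately show "Poly_Mapping.keys (bd1 qop (frag_of g)) \<subseteq> S \<and> h (bd1 qop (frag_of g)) = 0"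
          unfolding e by blast
      qed
      then show "u \<in> kernel (C0 X) integer_group h" using c unfolding kernel_def C0 by auto
    qed
  qed
  show ?thesis
    unfolding H0_def B_def[symmetric] ker[symmetric] by (rule group_hom.FactGroup_iso[OF gh surj])
qed

end
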